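(* Let $F\in\mathbb{C}[x]$ be a polynomial of degree $n\ge 2$, let $\Delta=\Delta(m,r)$ be a disk, and let $\rho_1=\frac{2\sqrt2}{3}$, $\rho_2=\frac43$. Let $\mathbf{T}_*(\Delta)$ be defined (as in the context) from any family of soft tests $\tilde T_0,\ldots,\tilde T_n$ with the stated properties. Then: (a) if $\Delta$ is $(\rho_1,\rho_2)$-isolating for a set of $k$ roots of $F$, then $\mathbf{T}_*(\Delta)$ returns $k$; (b) if $\mathbf{T}_*(\Delta)$ returns some $k\ge 0$, then $\Delta$ contains exactly $k$ roots of $F$ (counted with multiplicity).
   Context: $\Delta(m,r)$ is the open disk with center $m$, radius $r>0$, $\lambda\cdot\Delta(m,r):=\Delta(m,\lambda r)$. A disk $\Delta$ is $(\rho_1,\rho_2)$-isolating for a set $S$ of roots of $F$ (with multiplicity) if $\rho_1\cdot\Delta$ contains exactly the roots in $S$ and $\rho_2\cdot\Delta\setminus\rho_1\cdot\Delta$ contains no root of $F$. Let $F_\Delta(x):=F(m+rx)$. Graeffe iteration: for $P$ of degree $n$ written $P(x)=P_e(x^2)+xP_o(x^2)$, $P^{[1]}(x):=(-1)^n[P_e(x)^2-xP_o(x)^2]$, $P^{[j]}:=(P^{[j-1]})^{[1]}$. Let $N:=\lceil\log_2(1+\log_2n)\rceil+5$ and $G:=F_\Delta^{[N]}=\sum_{i=0}^n g_ix^i$. For $K\ge1$, $T_k(0,1,K,G)$ holds iff $|g_k|>K\sum_{i\ne k}|g_i|$. For each $k\in\{0,\ldots,n\}$, $\tilde T_k$ is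 a procedure returning True, False, or Undecided such that: it returns True only if $T_k(0,1,1,G)$ holds, and it returns True whenever $T_k(0,1,\frac32,G)$ holds. Then $\mathbf{T}_*(\Delta)$ returns $k$ if there is a $k$ for which $\tilde T_k$ returns True, and returns $-1$ otherwise. *)

theory Defs
  imports Complex_Main "HOL-Computational_Algebra.Polynomial"
begin

definition disk :: "complex \<Rightarrow> real \<Rightarrow> complex set" where
  "disk m r = {z. cmod (z - m) < r}"

definition root_count :: "complex poly \<Rightarrow> complex set \<Rightarrow> nat" where
  "root_count F S = (\<Sum>z\<in>{z. poly F z = 0 \<and> z \<in> S}. order z F)"

definition isolating :: "complex poly \<Rightarrow> complex \<Rightarrow> real \<Rightarrow> real \<Rightarrow> real \<Rightarrow> nat \<Rightarrow> bool" where
  "isolating F m r \<rho>1 \<rho>2 k \<longleftrightarrow>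
     root_count F (disk m (\<rho>1 * r)) = k \<and>
     (\<forall>z. z \<in> disk m (\<rho>2 * r) - disk m (\<rho>1 * r) \<longrightarrow> poly F z \<noteq> 0)"

definition F_disk :: "complex poly \<Rightarrow> complex \<Rightarrow> real \<Rightarrow> complex poly" where
  "F_disk F m r = pcompose F [:m, complex_of_real r:]"

text \<open>Even and odd parts: P(x) = P_e(x^2) + x P_o(x^2).\<close>
definition even_part :: "'a::comm_ring_1 poly \<Rightarrow> 'a poly" where
  "even_part P = Poly (map (\<lambda>i. coeff P (2 * i)) [0..<Suc (degree P)])"

definition odd_part :: "'a::comm_ring_1 poly \<Rightarrow> 'a poly" where
  "odd_part P = Poly (map (\<lambda>i. coeff P (2 * i + 1)) [0..<Suc (degree P)])"

definition graeffe :: "'a::comm_ring_1 poly \<Rightarrow> 'a poly" where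
  "graeffe P = smult ((-1) ^ degree P)
      (even_part P ^ 2 - [:0, 1:] * odd_part P ^ 2)"

definition graeffe_iter :: "nat \<Rightarrow> 'a::comm_ring_1 poly \<Rightarrow> 'a poly" where
  "graeffe_iter j P = (graeffe ^^ j) P"

definition graeffe_N :: "nat \<Rightarrow> nat" where
  "graeffe_N n = nat \<lceil>log 2 (1 + log 2 (real n))\<rceil> + 5"

definition T_test :: "complex poly \<Rightarrow> nat \<Rightarrow> real \<Rightarrow> nat \<Rightarrow> bool" where
  "T_test G n K k \<longleftrightarrow> cmod (coeff G k) > K * (\<Sum>i\<in>{0..n} - {k}. cmod (coeff G i))"

datatype soft_result = STrue | SFalse | Undecided

definition T_star :: "nat \<Rightarrow> (nat \<Rightarrow> soft_result) \<Rightarrow> int" where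
  "T_star n Tt = (if \<exists>k\<le>n. Tt k = STrue then int (SOME k. k \<le> n \<and> Tt k = STrue) else -1)"

end

theory Submission
  imports Defs "HOL-Complex_Analysis.Complex_Analysis" "HOL-Computational_Algebra.Fundamental_Theorem_Algebra"
begin

lemma size_count_sum: "size M = (\<Sum>x\<in>set_mset M. count M x)"
  by (simp add: size_multiset_overloaded_eq)

lemma rc_proots:
  assumes "p \<noteq> 0"
  shows "root_count p S = size (filter_mset (\<lambda>z. z \<in> S) (proots p))"
proof -
  have "size (filter_mset (\<lambda>z. z \<in> S) (proots p)) =
     (\<Sum>x\<in>set_mset (filter_mset (\<lambda>z. z \<in> S) (proots p)). count (filter_mset (\<lambda>z. z \<in> S) (proots p)) x)"
    by (rule size_count_sum)
  also have "set_mset (filter_mset (\<lambda>z. z \<in> S) (proots p)) = {z. poly p z = 0 \<and> z \<in> S}"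
    using assms by auto
  also have "(\<Sum>x\<in>{z. poly p z = 0 \<and> z \<in> S}. count (filter_mset (\<lambda>z. z \<in> S) (proots p)) x)
     = (\<Sum>x\<in>{z. poly p z = 0 \<and> z \<in> S}. order x p)"
    using assms by (intro sum.cong) auto
  finally show ?thesis unfolding root_count_def by simp
qed

lemma zorder_poly:
  fixes p :: "complex poly"
  assumes "p \<noteq> 0"
  shows "zorder (poly p) z = int (order z p)"
proof -
  obtain q where q: "p = [:- z, 1:] ^ order z p * q" "\<not> [:- z, 1:] dvd q"
    using order_decomp[OF assms] by blast
  have "poly q z \<noteq> 0" using q(2) by (simp add: poly_eq_0_iff_dvd)
  show ?thesis
  proof (rule zorder_eqI[where S=UNIV and g="poly q"])
    fix w assume "w \<in> (UNIV::complex set)" "w \<noteq> z"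
    show "poly p w = poly q w * (w - z) powi int (order z p)"
      by (subst q(1)) (simp add: power_int_of_nat mult.commute)
  qed (use \<open>poly q z \<noteq> 0\<close> in \<open>auto intro!: holomorphic_intros\<close>)
qed

lemma poly_sum_le:
  fixes p :: "complex poly"
  assumes "degree p \<le> n"
  shows "poly p x = (\<Sum>i\<le>n. coeff p i * x ^ i)"
proof -
  have "poly p x = (\<Sum>i\<le>degree p. coeff p i * x ^ i)" by (rule Polynomial.poly_altdef)
  also have "\<dots> = (\<Sum>i\<le>n. coeff p i * x ^ i)"
    by (rule sum.mono_neutral_left) (use assms in \<open>auto simp: coeff_eq_0\<close>)
  finally show ?thesis .
qed

lemma pellet:
  fixes G :: "complex poly"
  assumes G0: "G \<noteq> 0" and deg: "degree G \<le> n" and kn: "k \<le> n"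
    and dom: "cmod (coeff G k) > (\<Sum>i\<in>{0..n} - {k}. cmod (coeff G i))"
  shows "root_count G (disk 0 1) = k"
proof -
  define c where "c = coeff G k"
  define f where "f = (\<lambda>z::complex. c * z ^ k)"
  define g where "g = (\<lambda>z. poly G z - f z)"
  have fg': "f p + g p = poly G p" for p by (simp add: g_def)
  have fg: "(\<lambda>p. f p + g p) = poly G" by (rule ext) (rule fg')
  have gsum: "g z = (\<Sum>i\<in>{0..n} - {k}. coeff G i * z ^ i)" for z
  proof -
    have "poly G z = (\<Sum>i\<in>{0..n}. coeff G i * z ^ i)"
      using poly_sum_le[OF deg] by (simp add: atLeast0AtMost)
    also have "\<dots> = coeff G k * z ^ k + (\<Sum>i\<in>{0..n} - {k}. coeff G i * z ^ i)"
      by (rule sum.remove) (use kn in auto)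
    finally show ?thesis by (simp add: g_def f_def c_def)
  qed
  have less: "cmod (f z) > cmod (g z)" if "cmod z = 1" for z
  proof -
    have "cmod (g z) \<le> (\<Sum>i\<in>{0..n} - {k}. cmod (coeff G i * z ^ i))"
      unfolding gsum by (rule norm_sum)
    also have "\<dots> = (\<Sum>i\<in>{0..n} - {k}. cmod (coeff G i))"
      using that by (simp add: norm_mult norm_power)
    also have "\<dots> < cmod (f z)" using dom that by (simp add: f_def c_def norm_mult norm_power)
    finally show ?thesis .
  qed
  have "0 \<le> (\<Sum>i\<in>{0..n} - {k}. cmod (coeff G i))" by (intro sum_nonneg) auto
  then have c0: "c \<noteq> 0" using dom by (auto simp: c_def)
  have R: "(\<Sum>p\<in>{p\<in>UNIV. (\<lambda>p. f p + g p) p = 0}. winding_number (circlepath 0 1) p * zorder (\<lambda>p. f p + g p) p)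
          = (\<Sum>p\<in>{p\<in>UNIV. f p = 0}. winding_number (circlepath 0 1) p * zorder f p)"
  proof (rule Rouche_theorem)
    show "finite {p \<in> UNIV. f p + g p = 0}"
    proof -
      have "{p \<in> UNIV. f p + g p = 0} = {p. poly G p = 0}" unfolding fg' by simp
      then show ?thesis using poly_roots_finite[OF G0] by (simp only:)
    qed
    show "finite {p \<in> UNIV. f p = 0}"
      by (rule finite_subset[of _ "{0}"]) (auto simp: f_def c0)
    show "f holomorphic_on UNIV" unfolding f_def by (intro holomorphic_intros)
    show "g holomorphic_on UNIV" unfolding g_def f_def by (intro holomorphic_intros)
    show "\<forall>z\<in>path_image (circlepath 0 1). cmod (g z) < cmod (f z)"
      using less by auto
  qed auto
  have rhs: "(\<Sum>p\<in>{p\<in>UNIV. f p = 0}. winding_number (circlepath 0 1) p * zorder f p) = of_nat k"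
  proof (cases "k = 0")
    case True
    then have "{p\<in>UNIV. f p = 0} = {}" by (auto simp: f_def c0)
    then show ?thesis using True by simp
  next
    case False
    then have e: "{p\<in>UNIV. f p = 0} = {0}" by (auto simp: f_def c0)
    have "zorder f 0 = int k"
      by (rule zorder_eqI[where S=UNIV and g="\<lambda>_. c"]) (auto simp: f_def c0 power_int_of_nat)
    then show ?thesis unfolding e by (simp add: winding_number_circlepath_centre)
  qed
  have each: "winding_number (circlepath 0 1) p * complex_of_int (zorder (poly G) p) =
         (if cmod p < 1 then of_nat (order p G) else 0)" if p: "poly G p = 0" for p
  proof -
    have "cmod p \<noteq> 1"
    proof
      assume "cmod p = 1"
      then have "cmod (f p) > cmod (g p)" by (rule less)
      moreover have "f p = - g p" using fg'[of p] p by (simp add: eq_neg_iff_add_eq_0)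
      ultimately show False by simp
    qed
    show ?thesis
    proof (cases "cmod p < 1")
      case True
      then show ?thesis using winding_number_circlepath[of p 0 1]
        by (simp add: zorder_poly[OF G0])
    next
      case False
      with \<open>cmod p \<noteq> 1\<close> have "cmod p > 1" by simp
      have "winding_number (circlepath 0 1) p = 0"
      proof (rule winding_number_zero_outside[where s="cball 0 1"])
        show "path (circlepath 0 1)" by (simp add: valid_path_imp_path)
        show "p \<notin> cball 0 1" using \<open>cmod p > 1\<close> by simp
        show "path_image (circlepath 0 1) \<subseteq> cball 0 1" by (auto simp: sphere_def)
        show "convex (cball (0::complex) 1)" by simp
        show "pathfinish (circlepath 0 1) = pathstart (circlepath 0 1)" by simp
      qed
      then show ?thesis using False by simp
    qed
  qed
  have "(\<Sum>p\<in>{p. poly G p = 0}. if cmod p < 1 then (of_nat (order p G)::complex) else 0)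
       = (\<Sum>p\<in>{p\<in>{p. poly G p = 0}. cmod p < 1}. of_nat (order p G))"
    by (rule sum.inter_filter[symmetric]) (rule poly_roots_finite[OF G0])
  also have "{p\<in>{p. poly G p = 0}. cmod p < 1} = {p. poly G p = 0 \<and> p \<in> disk 0 1}"
    by (auto simp: disk_def)
  also have "(\<Sum>p\<in>{p. poly G p = 0 \<and> p \<in> disk 0 1}. (of_nat (order p G)::complex)) = of_nat (root_count G (disk 0 1))" by (simp add: root_count_def)
  finally have eq: "(\<Sum>p\<in>{p. poly G p = 0}. if cmod p < 1 then (of_nat (order p G)::complex) else 0) = of_nat (root_count G (disk 0 1))" .
  have "(\<Sum>p\<in>{p\<in>UNIV. poly G p = 0}. winding_number (circlepath 0 1) p * complex_of_int (zorder (poly G) p)) = of_nat k"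
    using R rhs by (simp add: fg')
  also have "(\<Sum>p\<in>{p\<in>UNIV. poly G p = 0}. winding_number (circlepath 0 1) p * complex_of_int (zorder (poly G) p))
     = (\<Sum>p\<in>{p. poly G p = 0}. if cmod p < 1 then (of_nat (order p G)::complex) else 0)"
    by (intro sum.cong) (auto simp: each)
  finally have "(of_nat (root_count G (disk 0 1))::complex) = of_nat k"
    using eq by simp
  then show ?thesis by (simp only: of_nat_eq_iff)
qed

lemma coeff_even_part: "coeff (even_part P) i = coeff P (2 * i)"
  by (auto simp: even_part_def nth_default_def coeff_eq_0 simp del: upt_Suc)

lemma coeff_odd_part: "coeff (odd_part P) i = coeff P (2 * i + 1)"
  by (auto simp: odd_part_def nth_default_def coeff_eq_0 simp del: upt_Suc)

lemma sum_even_odd: "(\<Sum>i<2*K. f i) = (\<Sum>i<K. f (2*i) + f (2*i+1))" for f :: "nat \<Rightarrow> 'a::comm_monoid_add"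
  by (induction K) (auto simp: ac_simps)

lemma poly_sum_lt:
  fixes p :: "complex poly"
  assumes "degree p < K"
  shows "poly p x = (\<Sum>i<K. coeff p i * x ^ i)"
proof -
  have "poly p x = (\<Sum>i\<le>degree p. coeff p i * x ^ i)" by (rule Polynomial.poly_altdef)
  also have "\<dots> = (\<Sum>i<K. coeff p i * x ^ i)"
    by (rule sum.mono_neutral_left) (use assms in \<open>auto simp: coeff_eq_0\<close>)
  finally show ?thesis .
qed

lemma poly_even_odd:
  fixes P :: "complex poly"
  shows "poly P z = poly (even_part P) (z^2) + z * poly (odd_part P) (z^2)"
proof -
  define K where "K = Suc (degree P)"
  have dE: "degree (even_part P) < K"
    using degree_le[of "degree P" "even_part P"] by (auto simp: coeff_even_part coeff_eq_0 K_def)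
  have dO: "degree (odd_part P) < K"
    using degree_le[of "degree P" "odd_part P"] by (auto simp: coeff_odd_part coeff_eq_0 K_def)
  have "poly P z = (\<Sum>i<2*K. coeff P i * z ^ i)"
    by (rule poly_sum_lt) (simp add: K_def)
  also have "\<dots> = (\<Sum>i<K. coeff P (2*i) * z ^ (2*i) + coeff P (2*i+1) * z ^ (2*i+1))"
    by (rule sum_even_odd)
  also have "\<dots> = (\<Sum>i<K. coeff (even_part P) i * (z^2) ^ i) + z * (\<Sum>i<K. coeff (odd_part P) i * (z^2) ^ i)"
  proof -
    have "coeff P (2*i) * z ^ (2*i) + coeff P (2*i+1) * z ^ (2*i+1) =
      coeff (even_part P) i * (z^2) ^ i + z * (coeff (odd_part P) i * (z^2) ^ i)" for i
    proof -
      have "(z^i)^2 = (z^2)^i" by (metis power_mult mult.commute)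
      then show ?thesis by (simp add: coeff_even_part coeff_odd_part power_mult algebra_simps)
    qed
    then show ?thesis by (simp add: sum.distrib sum_distrib_left)
  qed
  also have "\<dots> = poly (even_part P) (z^2) + z * poly (odd_part P) (z^2)"
    by (simp add: poly_sum_lt[OF dE] poly_sum_lt[OF dO])
  finally show ?thesis .
qed

lemma poly_graeffe_sq:
  fixes P :: "complex poly"
  shows "poly (graeffe P) (z^2) = (-1) ^ degree P * poly P z * poly P (-z)"
proof -
  define E where "E = poly (even_part P) (z^2)"
  define Od where "Od = poly (odd_part P) (z^2)"
  have 1: "poly P z = E + z * Od" using poly_even_odd[of P z] by (simp add: E_def Od_def)
  have 2: "poly P (-z) = E - z * Od" using poly_even_odd[of P "-z"] by (simp add: E_def Od_def)
  have "poly (graeffe P) (z^2) = (-1) ^ degree P * (E^2 - z^2 * Od^2)"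
    by (simp add: graeffe_def E_def Od_def)
  also have "\<dots> = (-1) ^ degree P * poly P z * poly P (-z)"
    by (simp add: 1 2 algebra_simps power2_eq_square)
  finally show ?thesis .
qed

lemma prod_pm:
  fixes z :: complex
  shows "(\<Prod>a\<in>#A. z - a) * (\<Prod>a\<in>#A. - z - a) = (-1) ^ size A * (\<Prod>a\<in>#A. z^2 - a^2)"
  by (induction A) (auto simp: algebra_simps power2_eq_square)

lemma lin_prod_props:
  "degree (\<Prod>a\<in>#A. [:-a,1:]) = size A \<and> (\<Prod>a\<in>#A. [:-(a::complex),1:]) \<noteq> 0"
proof (induction A)
  case (add x A)
  define Q where "Q = (\<Prod>a\<in>#A. [:-a,1:])"
  have Q: "degree Q = size A" "Q \<noteq> 0" using add by (auto simp: Q_def)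
  have l: "[:-x,1:] \<noteq> 0" "degree [:-x,1:] = 1" by auto
  have e: "(\<Prod>a\<in>#add_mset x A. [:-a,1:]) = [:-x,1:] * Q" by (simp add: Q_def)
  have "degree ([:-x,1:] * Q) = 1 + size A" using Q l by (subst degree_mult_eq) auto
  moreover have "[:-x,1:] * Q \<noteq> 0" using Q l by (simp only: mult_eq_0_iff) simp
  ultimately show ?case unfolding e by simp
qed simp

lemma graeffe_factored:
  fixes c :: complex
  assumes "c \<noteq> 0"
  shows "graeffe (smult c (\<Prod>a\<in>#A. [:-a,1:])) = smult (c^2) (\<Prod>a\<in>#A. [:-(a^2),1:])"
proof -
  define P where "P = smult c (\<Prod>a\<in>#A. [:-a,1:])"
  have dP: "degree P = size A"
    using assms by (simp add: P_def lin_prod_props)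
  have pz: "poly P z = c * (\<Prod>a\<in>#A. z - a)" for z
    by (simp add: P_def poly_prod_mset)
  have "poly (graeffe P) w = poly (smult (c^2) (\<Prod>a\<in>#A. [:-(a^2),1:])) w" for w
  proof -
    define z where "z = csqrt w"
    have w: "w = z^2" by (simp add: z_def)
    have "poly (graeffe P) w = (-1) ^ size A * poly P z * poly P (-z)"
      unfolding w poly_graeffe_sq dP ..
    also have "\<dots> = (-1) ^ size A * c^2 * ((\<Prod>a\<in>#A. z - a) * (\<Prod>a\<in>#A. - z - a))"
      by (simp add: pz power2_eq_square)
    also have "\<dots> = ((-1) ^ size A * (-1) ^ size A) * c^2 * (\<Prod>a\<in>#A. z^2 - a^2)"
      by (simp add: prod_pm)
    also have "(-1) ^ size A * (-1) ^ size A = (1::complex)"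
      by (simp flip: power_add)
    also have "1 * c^2 * (\<Prod>a\<in>#A. z^2 - a^2) = poly (smult (c^2) (\<Prod>a\<in>#A. [:-(a^2),1:])) w"
      by (simp add: w poly_prod_mset)
    finally show ?thesis .
  qed
  then have "poly (graeffe P) = poly (smult (c^2) (\<Prod>a\<in>#A. [:-(a^2),1:]))" by (rule ext)
  then show ?thesis unfolding P_def by (simp only: poly_eq_poly_eq_iff)
qed

lemma graeffe_iter_factored:
  fixes c :: complex
  assumes "c \<noteq> 0"
  shows "graeffe_iter j (smult c (\<Prod>a\<in>#A. [:-a,1:])) = smult (c^(2^j)) (\<Prod>a\<in>#A. [:-(a^(2^j)),1:])"
proof (induction j)
  case 0
  then show ?case by (simp add: graeffe_iter_def)
next
  case (Suc j)
  have "graeffe_iter (Suc j) (smult c (\<Prod>a\<in>#A. [:-a,1:])) = graeffe (graeffe_iter j (smult c (\<Prod>a\<in>#A. [:-a,1:])))"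
    by (simp add: graeffe_iter_def)
  also have "\<dots> = graeffe (smult (c^(2^j)) (\<Prod>a\<in>#image_mset (\<lambda>a. a^(2^j)) A. [:-a,1:]))"
    by (simp add: Suc image_mset.compositionality comp_def)
  also have "\<dots> = smult ((c^(2^j))^2) (\<Prod>a\<in>#image_mset (\<lambda>a. a^(2^j)) A. [:-(a^2),1:])"
    by (rule graeffe_factored) (use assms in simp)
  also have "\<dots> = smult (c^(2^Suc j)) (\<Prod>a\<in>#A. [:-(a^(2^Suc j)),1:])"
    by (simp add: image_mset.compositionality comp_def power_mult[symmetric] mult.commute)
  finally show ?case .
qed

lemma pcompose_prod_mset: "pcompose (\<Prod>a\<in>#A. f a) q = (\<Prod>a\<in>#A. pcompose (f a) q)"
  by (induction A) (auto simp: pcompose_mult pcompose_1)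

lemma prod_mset_smult: "(\<Prod>a\<in>#A. smult (r::'a::comm_ring_1) (h a)) = smult (r ^ size A) (\<Prod>a\<in>#A. h a)"
  by (induction A) (auto simp: mult_ac)

lemma proots_lin: "proots (\<Prod>a\<in>#A. [:-a,1:]) = (A :: complex multiset)"
proof (induction A)
  case (add x A)
  have e: "(\<Prod>a\<in>#add_mset x A. [:-a,1:]) = [:-x,1:] * (\<Prod>a\<in>#A. [:-a,1:])" by simp
  have "proots [:-x,1:] = {#x#}" using proots_linear_factor[of "-x"] by simp
  then show ?case unfolding e using add lin_prod_props[of A]
    by (subst proots_mult) auto
qed simp

lemma F_disk_factored:
  fixes F :: "complex poly"
  assumes "F \<noteq> 0" "r > 0"
  shows "F_disk F m r = smult (lead_coeff F * of_real r ^ degree F)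
           (\<Prod>b\<in># image_mset (\<lambda>a. (a - m) / of_real r) (proots F). [:-b,1:])"
proof -
  have F: "F = smult (lead_coeff F) (\<Prod>a\<in>#proots F. [:-a,1:])"
    by (rule complex_poly_decompose_multiset[symmetric])
  have one: "pcompose [:-a,1:] [:m, of_real r:] = smult (of_real r) [:-((a - m) / of_real r), 1:]" for a
    using assms(2) by (simp add: pcompose_pCons field_simps)
  have "F_disk F m r = smult (lead_coeff F) (\<Prod>a\<in>#proots F. pcompose [:-a,1:] [:m, of_real r:])"
    unfolding F_disk_def by (subst F) (simp add: pcompose_smult pcompose_prod_mset)
  also have "\<dots> = smult (lead_coeff F) (smult (of_real r ^ size (proots F))
       (\<Prod>a\<in>#proots F. [:-((a - m) / of_real r), 1:]))"
    by (simp only: one prod_mset_smult)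
  also have "size (proots F) = degree F" by (rule size_proots_complex)
  finally show ?thesis by (simp add: image_mset.compositionality comp_def)
qed

lemma size_filter_image: "size (filter_mset P (image_mset f A)) = size (filter_mset (\<lambda>x. P (f x)) A)"
  by (simp add: filter_mset_image_mset)

lemma rc_disk_B:
  fixes F :: "complex poly"
  assumes "F \<noteq> 0" "r > 0" "\<rho> > 0"
  shows "root_count F (disk m (\<rho> * r)) =
     size (filter_mset (\<lambda>b. cmod b < \<rho>) (image_mset (\<lambda>a. (a - m) / of_real r) (proots F)))"
proof -
  have "(\<lambda>a. a \<in> disk m (\<rho> * r)) = (\<lambda>a. cmod ((a - m) / of_real r) < \<rho>)"
    using assms by (auto simp: disk_def norm_divide field_simps)
  then show ?thesis
    by (simp add: rc_proots[OF assms(1)] size_filter_image)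
qed

lemma pow_lt1: "M > 0 \<Longrightarrow> cmod ((b::complex) ^ M) < 1 \<longleftrightarrow> cmod b < 1"
  by (simp add: norm_power power_less_one_iff)

definition l1 :: "complex poly \<Rightarrow> real" where
  "l1 p = (\<Sum>i\<le>degree p. cmod (coeff p i))"

lemma l1_eq: "degree p \<le> N \<Longrightarrow> l1 p = (\<Sum>i\<le>N. cmod (coeff p i))"
  unfolding l1_def by (rule sum.mono_neutral_left) (auto simp: coeff_eq_0)

lemma l1_nonneg: "l1 p \<ge> 0"
  unfolding l1_def by (intro sum_nonneg) auto

lemma l1_add: "l1 (p + q) \<le> l1 p + l1 q"
proof -
  define N where "N = max (degree p) (degree q)"
  have "l1 (p + q) = (\<Sum>i\<le>N. cmod (coeff (p + q) i))"
    by (rule l1_eq) (auto simp: N_def degree_add_le)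
  also have "\<dots> \<le> (\<Sum>i\<le>N. cmod (coeff p i) + cmod (coeff q i))"
    by (intro sum_mono) (simp add: norm_triangle_ineq)
  also have "\<dots> = l1 p + l1 q"
  proof -
    have "l1 p = (\<Sum>i\<le>N. cmod (coeff p i))" by (rule l1_eq) (simp add: N_def)
    moreover have "l1 q = (\<Sum>i\<le>N. cmod (coeff q i))" by (rule l1_eq) (simp add: N_def)
    ultimately show ?thesis by (simp add: sum.distrib)
  qed
  finally show ?thesis .
qed

lemma l1_pCons: "l1 (pCons a p) = cmod a + l1 p"
proof -
  have "l1 (pCons a p) = (\<Sum>i\<le>Suc (degree p). cmod (coeff (pCons a p) i))"
    by (rule l1_eq) (simp add: degree_pCons_le)
  also have "\<dots> = cmod a + (\<Sum>i\<le>degree p. cmod (coeff p i))"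
    by (subst sum.atMost_Suc_shift) simp
  finally show ?thesis by (simp add: l1_def)
qed

lemma l1_smult: "l1 (smult a p) = cmod a * l1 p"
proof -
  have "l1 (smult a p) = (\<Sum>i\<le>degree p. cmod (coeff (smult a p) i))"
    by (rule l1_eq) (simp add: degree_smult_le)
  then show ?thesis by (simp add: l1_def norm_mult sum_distrib_left)
qed

lemma l1_0 [simp]: "l1 0 = 0" by (simp add: l1_def)

lemma l1_mult: "l1 (p * q) \<le> l1 p * l1 q"
proof (induction p rule: pCons_induct)
  case 0
  then show ?case by simp
next
  case (pCons a p)
  have "l1 (pCons a p * q) = l1 (smult a q + pCons 0 (p * q))" by simp
  also have "\<dots> \<le> l1 (smult a q) + l1 (pCons 0 (p * q))" by (rule l1_add)
  also have "\<dots> = cmod a * l1 q + l1 (p * q)" by (simp add: l1_smult l1_pCons)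
  also have "\<dots> \<le> cmod a * l1 q + l1 p * l1 q" using pCons.IH by simp
  also have "\<dots> = l1 (pCons a p) * l1 q" by (simp add: l1_pCons algebra_simps)
  finally show ?case .
qed

lemma l1_monom1: "l1 (monom 1 k) = 1"
proof -
  have "l1 (monom 1 k) = (\<Sum>i\<le>k. cmod (coeff (monom (1::complex) k) i))"
    by (rule l1_eq) (simp add: degree_monom_le)
  also have "\<dots> = (\<Sum>i\<le>k. if i = k then 1 else 0)"
    by (intro sum.cong) (auto simp: coeff_monom)
  finally show ?thesis by simp
qed

lemma l1_const: "l1 [:a:] = cmod a"
  using l1_pCons[of a 0] by simp

lemma l1_lin0: "l1 [:0, a:] = cmod a"
  using l1_pCons[of 0 "[:a:]"] by (simp add: l1_const)

lemma prod_near: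
  assumes "\<And>x. x \<in># X \<Longrightarrow> l1 (f x - monom 1 (e x)) \<le> \<delta>" and "\<delta> \<ge> 0"
  shows "l1 ((\<Prod>x\<in>#X. f x) - monom 1 (\<Sum>x\<in>#X. e x)) \<le> (1 + \<delta>) ^ size X - 1"
  using assms(1)
proof (induction X)
  case empty
  then show ?case by simp
next
  case (add x X)
  define Q where "Q = (\<Prod>x\<in>#X. f x)"
  define E where "E = (\<Sum>x\<in>#X. e x)"
  define A where "A = f x - monom 1 (e x)"
  define B where "B = Q - monom 1 E"
  have b: "l1 B \<le> (1 + \<delta>) ^ size X - 1" using add by (simp add: B_def Q_def E_def)
  have a: "l1 A \<le> \<delta>" using add by (simp add: A_def)
  have eq: "(\<Prod>x\<in>#add_mset x X. f x) - monom 1 (\<Sum>x\<in>#add_mset x X. e x)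
      = monom 1 (e x) * B + (A * monom 1 E + A * B)"
    by (simp add: A_def B_def Q_def E_def algebra_simps mult_monom)
  have "l1 (monom 1 (e x) * B + (A * monom 1 E + A * B)) \<le> l1 (monom 1 (e x) * B) + (l1 (A * monom 1 E) + l1 (A * B))"
    by (meson add_mono l1_add order_trans order_refl)
  also have "\<dots> \<le> l1 B + (l1 A + l1 A * l1 B)"
    using l1_mult[of "monom 1 (e x)" B] l1_mult[of A "monom 1 E"] l1_mult[of A B]
    by (simp add: l1_monom1)
  also have "\<dots> \<le> ((1 + \<delta>) ^ size X - 1) + (\<delta> + \<delta> * ((1 + \<delta>) ^ size X - 1))"
    using a b l1_nonneg[of A] l1_nonneg[of B] assms(2)
    by (intro add_mono mult_mono) auto
  also have "\<dots> = (1 + \<delta>) ^ size (add_mset x X) - 1"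
    by (simp add: algebra_simps)
  finally show ?case unfolding eq .
qed

lemma ttest_smult:
  assumes "c \<noteq> 0"
  shows "T_test (smult c Q) n K k \<longleftrightarrow> T_test Q n K k"
proof -
  have "T_test (smult c Q) n K k \<longleftrightarrow> cmod c * cmod (coeff Q k) > cmod c * (K * (\<Sum>i\<in>{0..n} - {k}. cmod (coeff Q i)))"
    by (simp add: T_test_def norm_mult sum_distrib_left mult_ac)
  also have "\<dots> \<longleftrightarrow> T_test Q n K k"
    using assms by (simp add: T_test_def)
  finally show ?thesis .
qed

lemma aux_lin: "1 - t \<le> g \<Longrightarrow> t \<le> S \<Longrightarrow> S \<le> L \<Longrightarrow> L < 2/3 \<Longrightarrow> 0 \<le> t \<Longrightarrow> 3/2*(S - t) < (g::real)"
  by (simp add: algebra_simps)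

lemma ttest_near:
  assumes "k \<le> n" and "l1 T < 2/3"
  shows "T_test (monom 1 k + T) n (3/2) k"
proof -
  have S: "(\<Sum>i\<in>{0..n}. cmod (coeff T i)) \<le> l1 T"
  proof -
    have "(\<Sum>i\<in>{0..n}. cmod (coeff T i)) \<le> (\<Sum>i\<le>max n (degree T). cmod (coeff T i))"
      by (intro sum_mono2) auto
    also have "\<dots> = l1 T" by (rule l1_eq[symmetric]) simp
    finally show ?thesis .
  qed
  have rm: "(\<Sum>i\<in>{0..n} - {k}. cmod (coeff T i)) = (\<Sum>i\<in>{0..n}. cmod (coeff T i)) - cmod (coeff T k)"
    using assms(1) by (subst sum_diff1) auto
  have others: "(\<Sum>i\<in>{0..n} - {k}. cmod (coeff (monom 1 k + T) i)) = (\<Sum>i\<in>{0..n} - {k}. cmod (coeff T i))"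
    by (intro sum.cong) (auto simp: coeff_monom)
  have "cmod (coeff (monom 1 k + T) k) = cmod (1 + coeff T k)" by (simp add: coeff_monom)
  also have "\<dots> \<ge> 1 - cmod (coeff T k)"
    using norm_triangle_ineq2[of 1 "- coeff T k"] by simp
  finally have gk: "cmod (coeff (monom 1 k + T) k) \<ge> 1 - cmod (coeff T k)" .
  have tk: "cmod (coeff T k) \<le> (\<Sum>i\<in>{0..n}. cmod (coeff T i))"
    using assms(1) by (intro member_le_sum) auto
  show ?thesis unfolding T_test_def others rm
    using aux_lin[OF gk tk S assms(2) norm_ge_zero[of "coeff T k"]] .
qed

lemma split_prod:
  fixes W :: "complex multiset"
  assumes "\<And>w. w \<in># W \<Longrightarrow> \<not> P w \<Longrightarrow> w \<noteq> 0"
  shows "(\<Prod>w\<in>#W. [:-w,1:]) = smult (\<Prod>w\<in>#filter_mset (\<lambda>w. \<not> P w) W. -w)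
            (\<Prod>w\<in>#W. if P w then [:-w,1:] else [:1, -1/w:])"
  using assms
proof (induction W)
  case (add x W)
  have IH: "(\<Prod>w\<in>#W. [:-w,1:]) = smult (\<Prod>w\<in>#filter_mset (\<lambda>w. \<not> P w) W. -w)
            (\<Prod>w\<in>#W. if P w then [:-w,1:] else [:1, -1/w:])"
    using add by auto
  show ?case
  proof (cases "P x")
    case True
    then show ?thesis using IH by (simp add: mult_ac)
  next
    case False
    then have "x \<noteq> 0" using add by auto
    then have lx: "[:-x,1:] = smult (-x) [:1, -1/x:]" by simp
    define Q where "Q = (\<Prod>w\<in>#W. if P w then [:-w,1:] else [:1, -1/w:])"
    define D where "D = (\<Prod>w\<in>#filter_mset (\<lambda>w. \<not> P w) W. -w)"
    have "(\<Prod>w\<in>#add_mset x W. [:-w,1:]) = [:-x,1:] * (\<Prod>w\<in>#W. [:-w,1:])" by simp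
    also have "\<dots> = smult (-x) [:1, -1/x:] * smult D Q" by (simp only: IH lx Q_def D_def)
    also have "\<dots> = smult (-x * D) ([:1, -1/x:] * Q)" by (simp only: mult_smult_left mult_smult_right smult_smult) (simp add: mult.commute)
    also have "-x * D = (\<Prod>w\<in>#filter_mset (\<lambda>w. \<not> P w) (add_mset x W). -w)"
      using False by (simp add: D_def)
    also have "[:1, -1/x:] * Q = (\<Prod>w\<in>#add_mset x W. if P w then [:-w,1:] else [:1, -1/w:])"
      using False by (simp only: Q_def prod_mset.add_mset image_mset_add_mset if_False)
    finally show ?thesis .
  qed
qed simp

lemma sum_indicator_size: "(\<Sum>w\<in>#W. if P w then 1 else (0::nat)) = size (filter_mset P W)"
  by (induction W) auto

lemma dominant:
  fixes W :: "complex multiset"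
  assumes d0: "\<delta> > 0" and dn: "(1 + \<delta>) ^ size W < 5/3"
    and sep: "\<And>w. w \<in># W \<Longrightarrow> (P w \<longrightarrow> cmod w \<le> \<delta>) \<and> (\<not> P w \<longrightarrow> cmod w \<ge> 1/\<delta>)"
    and C0: "C \<noteq> 0" and sz: "size W \<le> n"
  shows "T_test (smult C (\<Prod>w\<in>#W. [:-w,1:])) n (3/2) (size (filter_mset P W))"
proof -
  define f where "f = (\<lambda>w. if P w then [:-w,1:] else [:1, -1/w:])"
  define e where "e = (\<lambda>w. if P w then 1 else (0::nat))"
  define D where "D = (\<Prod>w\<in>#filter_mset (\<lambda>w. \<not> P w) W. -w)"
  define k where "k = size (filter_mset P W)"
  have nz: "w \<noteq> 0" if "w \<in># W" "\<not> P w" for w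
  proof
    assume "w = 0"
    then show False using sep[OF that(1)] that(2) d0 by simp
  qed
  have spl: "(\<Prod>w\<in>#W. [:-w,1:]) = smult D (\<Prod>w\<in>#W. f w)"
    unfolding D_def f_def by (rule split_prod) (use nz in auto)
  have D0: "D \<noteq> 0" unfolding D_def using nz by (auto simp: prod_mset_zero_iff)
  have each: "l1 (f w - monom 1 (e w)) \<le> \<delta>" if w: "w \<in># W" for w
  proof (cases "P w")
    case True
    have "f w - monom 1 (e w) = [:-w:]" using True by (simp add: f_def e_def monom_Suc)
    then show ?thesis using sep[OF w] True by (simp add: l1_const)
  next
    case False
    have "f w - monom 1 (e w) = [:0, -1/w:]" using False by (simp add: f_def e_def monom_0 one_pCons)
    moreover have "cmod (-1/w) \<le> \<delta>"
    proof -
      have "cmod w \<ge> 1/\<delta>" using sep[OF w] False by simp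
      moreover have "1/\<delta> > 0" using d0 by simp
      ultimately have pos: "cmod w > 0" by linarith
      have "1 \<le> cmod w * \<delta>" using \<open>cmod w \<ge> 1/\<delta>\<close> d0 by (simp add: pos_divide_le_eq)
      then have "1 / cmod w \<le> \<delta>" using pos by (simp add: pos_divide_le_eq mult.commute)
      then show ?thesis by (simp add: norm_divide)
    qed
    ultimately show ?thesis by (simp add: l1_lin0)
  qed
  have near: "l1 ((\<Prod>w\<in>#W. f w) - monom 1 (\<Sum>w\<in>#W. e w)) \<le> (1 + \<delta>) ^ size W - 1"
    by (rule prod_near) (use each d0 in auto)
  have se: "(\<Sum>w\<in>#W. e w) = k" unfolding e_def k_def by (rule sum_indicator_size)
  define T where "T = (\<Prod>w\<in>#W. f w) - monom 1 k"
  have T: "l1 T < 2/3" using near dn unfolding T_def se by simp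
  have kn: "k \<le> n" unfolding k_def using size_filter_mset_lesseq[of P W] sz by linarith
  have "T_test (monom 1 k + T) n (3/2) k" by (rule ttest_near[OF kn T])
  moreover have "monom 1 k + T = (\<Prod>w\<in>#W. f w)" by (simp add: T_def)
  ultimately have "T_test (\<Prod>w\<in>#W. f w) n (3/2) k" by simp
  then have "T_test (smult (C * D) (\<Prod>w\<in>#W. f w)) n (3/2) k"
    using C0 D0 by (simp add: ttest_smult)
  then show ?thesis unfolding spl k_def by simp
qed

lemma bern:
  fixes \<delta> :: real
  assumes "\<delta> \<ge> 0" "\<delta> \<le> 1" "real n * \<delta> \<le> 1/4"
  shows "(1 + \<delta>) ^ n \<le> 4/3"
proof -
  have "1 + real n * (-\<delta>) \<le> (1 + (-\<delta>)) ^ n"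
    by (rule Bernoulli_inequality) (use assms in simp)
  then have b: "(1 - \<delta>) ^ n \<ge> 3/4" using assms(3) by simp
  have "(1 + \<delta>) ^ n * (1 - \<delta>) ^ n = (1 - \<delta>^2) ^ n"
    by (simp add: power_mult_distrib[symmetric] algebra_simps power2_eq_square)
  also have "\<dots> \<le> 1" using assms by (intro power_le_one) (auto simp: power_le_one)
  finally have p: "(1 + \<delta>) ^ n * (1 - \<delta>) ^ n \<le> 1" .
  have "(1 + \<delta>) ^ n * (3/4) \<le> (1 + \<delta>) ^ n * (1 - \<delta>) ^ n"
    using b assms(1) by (intro mult_left_mono) auto
  with p show ?thesis by simp
qed

lemma numeric:
  assumes "n \<ge> 2"
  shows "real n * (2 * sqrt 2 / 3) ^ (2 ^ graeffe_N n) \<le> 1/4"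
proof -
  define L where "L = log 2 (real n)"
  define K where "K = nat \<lceil>log 2 (1 + L)\<rceil>"
  define q :: real where "q = (8/9)^16"
  have L1: "L \<ge> 1" using assms by (simp add: L_def)
  have GN: "graeffe_N n = K + 5" by (simp add: graeffe_N_def K_def L_def)
  have sq: "(2 * sqrt 2 / 3) ^ 2 = (8/9::real)" by (simp add: power_divide power_mult_distrib)
  have "(2 * sqrt 2 / 3) ^ (2 ^ graeffe_N n) = ((2 * sqrt 2 / 3) ^ 2) ^ (16 * 2^K)"
    unfolding GN by (simp add: power_mult[symmetric] power_add mult.commute)
  also have "\<dots> = q ^ (2^K)" by (simp add: sq q_def power_mult)
  finally have e1: "(2 * sqrt 2 / 3) ^ (2 ^ graeffe_N n) = q ^ (2^K)" .
  have q0: "0 < q" "q \<le> 1/4" by (simp_all add: q_def power_divide)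
  have "log 2 (1 + L) \<ge> 0" using L1 by simp
  then have "real K \<ge> log 2 (1 + L)" unfolding K_def by linarith
  then have "2 powr real K \<ge> 2 powr log 2 (1 + L)" by simp
  then have K2: "real (2^K) \<ge> 1 + L" using L1 by (simp add: powr_realpow)
  have "q ^ (2^K) = q powr real (2^K)" by (rule powr_realpow[OF q0(1), symmetric])
  also have "\<dots> \<le> q powr (1 + L)" by (rule powr_mono') (use K2 q0 in auto)
  also have "\<dots> = q * q powr L" using q0 by (simp add: powr_add)
  also have "q powr L \<le> (1/2) powr L" by (rule powr_mono2) (use L1 q0 in auto)
  also have "(1/2::real) powr L = 1 / real n" using assms
    by (simp add: powr_divide L_def)
  finally have "q ^ (2^K) \<le> q * (1 / real n)" using q0 by simp
  then have "real n * q ^ (2^K) \<le> q" using assms by (simp add: field_simps)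
  then show ?thesis unfolding e1 using q0 by linarith
qed

lemma ttest_unique:
  assumes "T_test G n 1 j" "T_test G n (3/2) k" "j \<le> n" "k \<le> n"
  shows "j = k"
proof (rule ccontr)
  assume ne: "j \<noteq> k"
  have "cmod (coeff G k) \<le> (\<Sum>i\<in>{0..n} - {j}. cmod (coeff G i))"
    using ne assms(4) by (intro member_le_sum) auto
  with assms(1) have 1: "cmod (coeff G j) > cmod (coeff G k)" by (simp add: T_test_def)
  have "cmod (coeff G j) \<le> (\<Sum>i\<in>{0..n} - {k}. cmod (coeff G i))"
    using ne assms(3) by (intro member_le_sum) auto
  with assms(2) have 2: "cmod (coeff G k) > 3/2 * cmod (coeff G j)" by (simp add: T_test_def)
  from 1 2 norm_ge_zero[of "coeff G j"] show False by linarith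
qed

lemma pow_less_iff: "0 \<le> (x::real) \<Longrightarrow> 0 \<le> y \<Longrightarrow> M > 0 \<Longrightarrow> x ^ M < y ^ M \<longleftrightarrow> x < y"
  by (meson power_less_imp_less_base power_strict_mono)

theorem lemma3p9:
  fixes F :: "complex poly" and m :: complex and r :: real and n :: nat
    and Tt :: "nat \<Rightarrow> soft_result"
  assumes "degree F = n" and "n \<ge> 2" and "r > 0"
    and "\<And>k. k \<le> n \<Longrightarrow>
           (Tt k = STrue \<longrightarrow> T_test (graeffe_iter (graeffe_N n) (F_disk F m r)) n 1 k) \<and>
           (T_test (graeffe_iter (graeffe_N n) (F_disk F m r)) n (3/2) k \<longrightarrow> Tt k = STrue)"
  shows "(\<forall>k. isolating F m r (2 * sqrt 2 / 3) (4/3) k \<longrightarrow> T_star n Tt = int k)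
       \<and> (\<forall>k. T_star n Tt = int k \<longrightarrow> root_count F (disk m r) = k)"
proof -
  have F0: "F \<noteq> 0" using assms(1,2) by auto
  define R where "R = proots F"
  define B where "B = image_mset (\<lambda>a. (a - m) / of_real r) R"
  define C where "C = lead_coeff F * of_real r ^ degree F"
  define N where "N = graeffe_N n"
  define M :: nat where "M = 2 ^ N"
  define W where "W = image_mset (\<lambda>b. b ^ M) B"
  define G where "G = graeffe_iter N (F_disk F m r)"
  have M0: "M > 0" by (simp add: M_def)
  have C0: "C \<noteq> 0" using F0 assms(3) by (simp add: C_def)
  have CM0: "C ^ M \<noteq> 0" using C0 by simp
  have szB: "size B = n" using assms(1) by (simp add: B_def R_def size_proots_complex)
  have szW: "size W = n" using szB by (simp add: W_def)
  have Fd: "F_disk F m r = smult C (\<Prod>b\<in>#B. [:-b,1:])"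
    using F_disk_factored[OF F0 assms(3)] by (simp add: B_def R_def C_def)
  have GW: "G = smult (C ^ M) (\<Prod>w\<in>#W. [:-w,1:])"
    unfolding G_def Fd graeffe_iter_factored[OF C0]
    by (simp add: W_def M_def image_mset.compositionality comp_def)
  have G0: "G \<noteq> 0" using GW CM0 lin_prod_props[of W] by simp
  have degG: "degree G = n" using GW C0 CM0 lin_prod_props[of W] szW by simp
  have prG: "proots G = W" using GW CM0 by (simp add: proots_lin)
  have Tt_iff: "\<And>k. k \<le> n \<Longrightarrow> (Tt k = STrue \<longrightarrow> T_test G n 1 k) \<and> (T_test G n (3/2) k \<longrightarrow> Tt k = STrue)"
    using assms(4) unfolding G_def N_def by blast
  have rcB: "\<And>\<rho>. \<rho> > 0 \<Longrightarrow> root_count F (disk m (\<rho> * r)) = size (filter_mset (\<lambda>b. cmod b < \<rho>) B)"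
    unfolding B_def R_def by (rule rc_disk_B[OF F0 assms(3)])
  have partb: "root_count F (disk m r) = k" if "T_star n Tt = int k" for k
  proof -
    have ex: "\<exists>j\<le>n. Tt j = STrue"
    proof (rule ccontr)
      assume "\<not> (\<exists>j\<le>n. Tt j = STrue)"
      then have "T_star n Tt = -1" by (simp add: T_star_def)
      with that show False by simp
    qed
    then have "k = (SOME j. j \<le> n \<and> Tt j = STrue)" using that by (simp add: T_star_def)
    moreover have "(SOME j. j \<le> n \<and> Tt j = STrue) \<le> n \<and> Tt (SOME j. j \<le> n \<and> Tt j = STrue) = STrue"
      by (rule someI_ex) (use ex in blast)
    ultimately have kn: "k \<le> n" and tk: "Tt k = STrue" by auto
    have "T_test G n 1 k" using Tt_iff[OF kn] tk by blast
    then have dom: "cmod (coeff G k) > (\<Sum>i\<in>{0..n} - {k}. cmod (coeff G i))"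
      by (simp add: T_test_def)
    have "root_count G (disk 0 1) = k" by (rule pellet[OF G0 _ kn dom]) (simp add: degG)
    moreover have "root_count G (disk 0 1) = size (filter_mset (\<lambda>b. cmod b < 1) B)"
    proof -
      have "root_count G (disk 0 1) = size (filter_mset (\<lambda>w. w \<in> disk 0 1) W)"
        using rc_proots[OF G0] prG by simp
      also have "\<dots> = size (filter_mset (\<lambda>b. cmod (b ^ M) < 1) B)"
        by (simp add: W_def size_filter_image disk_def)
      also have "\<dots> = size (filter_mset (\<lambda>b. cmod b < 1) B)"
        using pow_lt1[OF M0] by simp
      finally show ?thesis .
    qed
    moreover have "root_count F (disk m r) = size (filter_mset (\<lambda>b. cmod b < 1) B)"
      using rcB[of 1] by simp
    ultimately show ?thesis by simp
  qed
  have parta: "T_star n Tt = int k" if iso: "isolating F m r (2 * sqrt 2 / 3) (4/3) k" for k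
  proof -
    define \<rho>1 :: real where "\<rho>1 = 2 * sqrt 2 / 3"
    define \<rho>2 :: real where "\<rho>2 = 4/3"
    define \<delta> where "\<delta> = \<rho>1 ^ M"
    have s32: "sqrt 2 < 3/2" by (rule real_less_lsqrt) (simp_all add: power2_eq_square)
    have r1: "0 < \<rho>1" "\<rho>1 < 1" unfolding \<rho>1_def using s32 by simp_all
    have s98: "sqrt 2 \<ge> 9/8"
      by (rule real_le_rsqrt) (simp add: power2_eq_square)
    have r12: "\<rho>1 * \<rho>2 \<ge> 1" unfolding \<rho>1_def \<rho>2_def using s98 by simp
    have d0: "\<delta> > 0" using r1 by (simp add: \<delta>_def)
    have d1: "\<delta> \<le> 1" using r1 by (simp add: \<delta>_def power_le_one)
    have nd: "real n * \<delta> \<le> 1/4" using numeric[OF assms(2)] by (simp add: \<delta>_def \<rho>1_def M_def N_def)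
    have "(1 + \<delta>) ^ size W \<le> 4/3" unfolding szW by (rule bern) (use d0 d1 nd in auto)
    then have dn: "(1 + \<delta>) ^ size W < 5/3" by simp
    have cnt: "root_count F (disk m (\<rho>1 * r)) = k" and ann: "\<And>z. z \<in> disk m (\<rho>2 * r) - disk m (\<rho>1 * r) \<Longrightarrow> poly F z \<noteq> 0"
      using iso by (auto simp: isolating_def \<rho>1_def \<rho>2_def)
    have kB: "size (filter_mset (\<lambda>b. cmod b < \<rho>1) B) = k" using cnt rcB[of \<rho>1] r1 by simp
    have big: "cmod b \<ge> \<rho>2" if b: "b \<in># B" "\<not> cmod b < \<rho>1" for b
    proof (rule ccontr)
      assume nb: "\<not> cmod b \<ge> \<rho>2"
      from b obtain a where a: "a \<in># R" "b = (a - m) / of_real r" by (auto simp: B_def)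
      have "poly F a = 0" using a(1) F0 by (simp add: R_def)
      moreover have "a \<in> disk m (\<rho>2 * r) - disk m (\<rho>1 * r)"
      proof -
        have "cmod b = cmod (a - m) / r" using a(2) assms(3) by (simp add: norm_divide)
        then have am: "cmod (a - m) = cmod b * r" using assms(3) by simp
        have "cmod b * r < \<rho>2 * r" using nb assms(3) by simp
        moreover have "\<not> cmod b * r < \<rho>1 * r" using b(2) assms(3) by simp
        ultimately show ?thesis by (simp add: disk_def am)
      qed
      ultimately show False using ann by blast
    qed
    define P where "P = (\<lambda>w::complex. cmod w < \<delta>)"
    have sep: "(P w \<longrightarrow> cmod w \<le> \<delta>) \<and> (\<not> P w \<longrightarrow> cmod w \<ge> 1/\<delta>)" if w: "w \<in># W" for w
    proof -
      from w obtain b where b: "b \<in># B" "w = b ^ M" by (auto simp: W_def)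
      have "cmod w \<ge> 1/\<delta>" if np: "\<not> P w"
      proof -
        have "\<not> cmod b < \<rho>1"
        proof
          assume "cmod b < \<rho>1"
          then have "cmod b ^ M < \<rho>1 ^ M" using M0 by (intro power_strict_mono) auto
          then show False using np b(2) by (simp add: P_def \<delta>_def norm_power)
        qed
        then have "cmod b \<ge> \<rho>2" using big b(1) by blast
        then have "cmod w \<ge> \<rho>2 ^ M" using b(2) by (simp add: norm_power power_mono \<rho>2_def)
        moreover have "\<rho>2 ^ M * \<delta> \<ge> 1"
        proof -
          have "\<rho>2 ^ M * \<delta> = (\<rho>1 * \<rho>2) ^ M" by (simp add: \<delta>_def power_mult_distrib)
          also have "\<dots> \<ge> 1" using r12 by (rule one_le_power)
          finally show ?thesis .
        qed
        ultimately have "cmod w * \<delta> \<ge> \<rho>2 ^ M * \<delta>" using d0 by (intro mult_right_mono) auto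
        with \<open>\<rho>2 ^ M * \<delta> \<ge> 1\<close> have "cmod w * \<delta> \<ge> 1" by linarith
        then show ?thesis using d0 by (simp add: pos_divide_le_eq)
      qed
      then show ?thesis by (auto simp: P_def)
    qed
    have T: "T_test G n (3/2) (size (filter_mset P W))"
      unfolding GW by (rule dominant[OF d0 dn sep CM0]) (simp_all add: szW)
    have "size (filter_mset P W) = size (filter_mset (\<lambda>b. cmod b < \<rho>1) B)"
    proof -
      have "size (filter_mset P W) = size (filter_mset (\<lambda>b. cmod b ^ M < \<rho>1 ^ M) B)"
        by (simp add: W_def size_filter_image P_def \<delta>_def norm_power)
      also have "\<dots> = size (filter_mset (\<lambda>b. cmod b < \<rho>1) B)"
        using pow_less_iff[OF _ _ M0] r1 by simp
      finally show ?thesis .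
    qed
    with T kB have Tk: "T_test G n (3/2) k" by simp
    have kn: "k \<le> n" using kB szB size_filter_mset_lesseq[of "\<lambda>b. cmod b < \<rho>1" B] by simp
    have tk: "Tt k = STrue" using Tt_iff[OF kn] Tk by blast
    have "(SOME j. j \<le> n \<and> Tt j = STrue) = k"
    proof (rule some_equality)
      show "k \<le> n \<and> Tt k = STrue" using kn tk by simp
      fix j assume j: "j \<le> n \<and> Tt j = STrue"
      then have "T_test G n 1 j" using Tt_iff by blast
      then show "j = k" using ttest_unique[OF _ Tk] j kn by blast
    qed
    then show ?thesis using kn tk by (auto simp: T_star_def)
  qed
  show ?thesis using parta partb by blast
qed

end
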